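(* Let $\mathbf{k}_1,\mathbf{k}_2,\ldots\in\mathbb{R}^{d_k}$, $\mathbf{v}_1,\mathbf{v}_2,\ldots\in\mathbb{R}^{d_v}$, and nonzero scalars $\alpha_s,\beta_s,\gamma_s$. Let $\mathbf{S}_0=\mathbf{0}\in\mathbb{R}^{d_v\times d_k}$ and $$\mathbf{S}_s=\mathbf{S}_{s-1}(\alpha_s\mathbf{I}-\beta_s\mathbf{k}_s\mathbf{k}_s^\top)+\gamma_s\mathbf{v}_s\mathbf{k}_s^\top,\quad s\ge1.$$ Then for every $t\ge1$, $\operatorname{row}\mathbf{S}_t\subseteq\operatorname{span}\langle\mathbf{k}_1,\ldots,\mathbf{k}_t\rangle$ and $\operatorname{col}\mathbf{S}_t\subseteq\operatorname{span}\langle\mathbf{v}_1,\ldots,\mathbf{v}_t\rangle$. Consequently $\operatorname{rank}\mathbf{S}_t\le\min(\operatorname{rank}\mathbf{K}_t,\operatorname{rank}\mathbf{V}_t)$, where $\mathbf{K}_t=(\mathbf{k}_1,\ldots,\mathbf{k}_t)$ and $\mathbf{V}_t=(\mathbf{v}_1,\ldots,\mathbf{v}_t)$.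
   Context: $\operatorname{row}$ and $\operatorname{col}$ denote the row space (a subspace of $\mathbb{R}^{d_k}$) and column space (a subspace of $\mathbb{R}^{d_v}$) of a $d_v\times d_k$ matrix. *)

theory Defs
  imports "HOL-Analysis.Analysis"
begin

definition outer :: "real^'m \<Rightarrow> real^'n \<Rightarrow> real^'n^'m" where
  "outer v k = (\<chi> i j. v $ i * k $ j)"

definition row_space :: "real^'n^'m \<Rightarrow> (real^'n) set" where
  "row_space A = span (rows A)"

definition col_space :: "real^'n^'m \<Rightarrow> (real^'m) set" where
  "col_space A = span (columns A)"

text \<open>Rank of the matrix whose columns are the vectors x 1, ..., x t (its column rank).\<close>
definition rank_cols :: "(nat \<Rightarrow> real^'n) \<Rightarrow> nat \<Rightarrow> nat" where
  "rank_cols x t = dim (span (x ` {1..t}))"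

end

theory Submission
  imports Defs
begin

lemma mm_entry:
  fixes A :: "real^'n^'m" and k :: "real^'n"
  shows "(A ** (a *\<^sub>R mat 1 - b *\<^sub>R outer k k) + c *\<^sub>R outer w k) $ i $ j
     = a * A$i$j - b * (A$i \<bullet> k) * k$j + c * w$i * k$j"
proof -
  have 1: "(\<Sum>n\<in>UNIV. A$i$n * (a * (mat 1 :: real^'n^'n)$n$j)) = a * A$i$j"
    by (simp add: mat_def if_distrib sum.If_cases cong: if_cong)
  have 2: "(\<Sum>n\<in>UNIV. A$i$n * (b * (k$n * k$j))) = b * (A$i \<bullet> k) * k$j"
    by (simp add: inner_vec_def sum_distrib_left sum_distrib_right mult_ac)
  show ?thesis
    by (simp add: matrix_matrix_mult_def outer_def right_diff_distrib sum_subtractf 1 2)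
qed

lemma row_upd:
  fixes A :: "real^'n^'m" and k :: "real^'n"
  shows "row i (A ** (a *\<^sub>R mat 1 - b *\<^sub>R outer k k) + c *\<^sub>R outer w k)
     = a *\<^sub>R row i A - (b * (row i A \<bullet> k)) *\<^sub>R k + (c * w$i) *\<^sub>R k"
  unfolding vec_eq_iff row_def vec_lambda_beta mm_entry
  by (simp add: inner_vec_def)

lemma col_upd:
  fixes A :: "real^'n^'m" and k :: "real^'n"
  shows "column j (A ** (a *\<^sub>R mat 1 - b *\<^sub>R outer k k) + c *\<^sub>R outer w k)
     = a *\<^sub>R column j A - (b * k$j) *\<^sub>R (A *v k) + (c * k$j) *\<^sub>R w"
  unfolding vec_eq_iff column_def vec_lambda_beta mm_entry
  by (simp add: matrix_vector_mult_def inner_vec_def mult_ac)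
theorem propositionF1:
  fixes k :: "nat \<Rightarrow> real^'dk" and v :: "nat \<Rightarrow> real^'dv"
    and \<alpha> \<beta> \<gamma> :: "nat \<Rightarrow> real"
    and S :: "nat \<Rightarrow> real^'dk^'dv"
  assumes nz: "\<And>s. s \<ge> 1 \<Longrightarrow> \<alpha> s \<noteq> 0 \<and> \<beta> s \<noteq> 0 \<and> \<gamma> s \<noteq> 0"
    and S0: "S 0 = 0"
    and Ss: "\<And>s. s \<ge> 1 \<Longrightarrow>
      S s = S (s - 1) ** (\<alpha> s *\<^sub>R mat 1 - \<beta> s *\<^sub>R outer (k s) (k s)) + \<gamma> s *\<^sub>R outer (v s) (k s)"
  shows "\<forall>t \<ge> 1.
      row_space (S t) \<subseteq> span (k ` {1..t}) \<and>
      col_space (S t) \<subseteq> span (v ` {1..t}) \<and>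
      rank (S t) \<le> min (rank_cols k t) (rank_cols v t)"
  proof -
  have inv: "(\<forall>i. row i (S t) \<in> span (k ` {1..t})) \<and> (\<forall>j. column j (S t) \<in> span (v ` {1..t}))" for t
  proof (induction t)
    case 0
    then show ?case by (simp add: S0 row_def column_def zero_vec_def)
  next
    case (Suc t)
    let ?K = "span (k ` {1..Suc t})" and ?V = "span (v ` {1..Suc t})"
    have eq: "S (Suc t) = S t ** (\<alpha> (Suc t) *\<^sub>R mat 1 - \<beta> (Suc t) *\<^sub>R outer (k (Suc t)) (k (Suc t)))
        + \<gamma> (Suc t) *\<^sub>R outer (v (Suc t)) (k (Suc t))"
      using Ss[of "Suc t"] by simp
    have Ksub: "span (k ` {1..t}) \<subseteq> ?K" by (rule span_mono) auto
    have Vsub: "span (v ` {1..t}) \<subseteq> ?V" by (rule span_mono) auto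
    have kin: "k (Suc t) \<in> ?K" by (rule span_base) auto
    have vin: "v (Suc t) \<in> ?V" by (rule span_base) auto
    have colsub: "span (columns (S t)) \<subseteq> span (v ` {1..t})"
      by (rule span_minimal) (use Suc in \<open>auto simp: columns_def\<close>)
    have Skin: "S t *v k (Suc t) \<in> ?V"
      using matrix_vector_mult_in_columnspace[of "S t" "k (Suc t)"] colsub Vsub by blast
    have R: "row i (S (Suc t)) \<in> ?K" for i
    proof -
      have "row i (S t) \<in> ?K" using Suc Ksub by blast
      then show ?thesis unfolding eq row_upd
        by (intro span_add span_diff span_scale kin)
    qed
    have C: "column j (S (Suc t)) \<in> ?V" for j
    proof -
      have "column j (S t) \<in> ?V" using Suc Vsub by blast
      then show ?thesis unfolding eq col_upd
        by (intro span_add span_diff span_scale vin Skin)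
    qed
    show ?case using R C by blast
  qed
  show ?thesis
  proof (intro allI impI conjI)
    fix t :: nat
    have r: "row_space (S t) \<subseteq> span (k ` {1..t})"
      unfolding row_space_def
      by (rule span_minimal) (use inv in \<open>auto simp: rows_def\<close>)
    have c: "col_space (S t) \<subseteq> span (v ` {1..t})"
      unfolding col_space_def
      by (rule span_minimal) (use inv in \<open>auto simp: columns_def\<close>)
    show "row_space (S t) \<subseteq> span (k ` {1..t})" by (rule r)
    show "col_space (S t) \<subseteq> span (v ` {1..t})" by (rule c)
    have "rank (S t) \<le> rank_cols k t"
      using dim_subset[OF r] unfolding row_rank_def row_space_def rank_cols_def by simp
    moreover have "rank (S t) \<le> rank_cols v t"
      using dim_subset[OF c] unfolding column_rank_def col_space_def rank_cols_def by simp
    ultimately show "rank (S t) \<le> min (rank_cols k t) (rank_cols v t)" by simp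
  qed
qed

end
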